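(* Let $\mathbf{X}_1,\dots,\mathbf{X}_T\in\mathbb{R}^{d\times\ell}$, $\mathbf{Z}_1,\dots,\mathbf{Z}_T\in\mathbb{R}^{2k\times k}$ with $2k\le d$, and let $L(\mathbf{Q})=-\sum_{i=1}^T\|\mathbf{X}_i^\top\mathbf{Q}\mathbf{Z}_i\|_F^2$ for $\mathbf{Q}\in\mathbb{R}^{d\times 2k}$. Given $\mathbf{Q}'\in\mathrm{St}(d,2k)$, let $\mathbf{R}=\sum_{i=1}^T\mathbf{X}_i\mathbf{X}_i^\top\mathbf{Q}'\mathbf{Z}_i\mathbf{Z}_i^\top$ with thin SVD $\mathbf{R}=\mathbf{W}\boldsymbol{\Sigma}\mathbf{V}^\top$, and set $\hat{\mathbf{Q}}=\mathbf{W}\mathbf{V}^\top$. Then $\hat{\mathbf{Q}}\in\arg\min_{\mathbf{Q}\in\mathrm{St}(d,2k)}\|\mathbf{Q}-\mathbf{R}\|_F^2$ and $L(\hat{\mathbf{Q}})\le L(\mathbf{Q}')$. In particular, with $\mathbf{Z}_i=[\cos(\boldsymbol{\Theta}t_i);\sin(\boldsymbol{\Theta}t_i)]$ and $\mathbf{Q}=[\mathbf{H}\ \mathbf{Y}]$, one has $\mathbf{R}=\sum_i[\mathbf{X}_i\mathbf{G}_i^\top\cos(\boldsymbol{\Theta}t_i)\ \ \mathbf{X}_i\mathbf{G}_i^\top\sin(\boldsymbol{\Theta}t_i)]$ with $\mathbf{G}_i=(\mathbf{Q}'\mathbf{Z}_i)^\top\mathbf{X}_i$, and the update does not increase the loss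 $-\sum_i\|\mathbf{X}_i^\top(\mathbf{H}\cos(\boldsymbol{\Theta}t_i)+\mathbf{Y}\sin(\boldsymbol{\Theta}t_i))\|_F^2$ for fixed $\boldsymbol{\Theta}$.
   Context: $\mathrm{St}(d,p)=\{\mathbf{Q}\in\mathbb{R}^{d\times p}:\mathbf{Q}^\top\mathbf{Q}=\mathbf{I}_p\}$ (Stiefel manifold). $\boldsymbol{\Theta}$ is a real diagonal $k\times k$ matrix, $t_i\in\mathbb{R}$, and $[\cdot;\cdot]$ denotes vertical stacking. *)

theory Defs
  imports "HOL-Analysis.Analysis"
begin

text \<open>Matrices are HOL-Analysis matrices: an m x n real matrix is \<open>real^'n^'m\<close>.
  The dimension 2k is represented by the sum type \<open>'k + 'k\<close> (CARD = 2 CARD('k)).\<close>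

definition frob_sq :: "real^'n^'m \<Rightarrow> real" where
  "frob_sq A = (\<Sum>i\<in>UNIV. \<Sum>j\<in>UNIV. (A $ i $ j)^2)"

definition stiefel :: "(real^'p^'d) set" where
  "stiefel = {Q. transpose Q ** Q = mat 1}"

definition diag_mat :: "real^'n^'n \<Rightarrow> bool" where
  "diag_mat A \<longleftrightarrow> (\<forall>i j. i \<noteq> j \<longrightarrow> A $ i $ j = 0)"

definition lossL :: "nat \<Rightarrow> (nat \<Rightarrow> real^'l^'d) \<Rightarrow> (nat \<Rightarrow> real^'k^'p) \<Rightarrow> real^'p^'d \<Rightarrow> real" where
  "lossL T X Z Q = - (\<Sum>i\<in>{1..T}. frob_sq (transpose (X i) ** Q ** Z i))"

definition Rmat :: "nat \<Rightarrow> (nat \<Rightarrow> real^'l^'d) \<Rightarrow> (nat \<Rightarrow> real^'k^'p) \<Rightarrow> real^'p^'d \<Rightarrow> real^'p^'d" where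
  "Rmat T X Z Q' = (\<Sum>i\<in>{1..T}. X i ** transpose (X i) ** Q' ** Z i ** transpose (Z i))"

definition mcos :: "real^'k^'k \<Rightarrow> real \<Rightarrow> real^'k^'k" where
  "mcos Th t = (\<chi> i j. if i = j then cos (Th $ i $ i * t) else 0)"

definition msin :: "real^'k^'k \<Rightarrow> real \<Rightarrow> real^'k^'k" where
  "msin Th t = (\<chi> i j. if i = j then sin (Th $ i $ i * t) else 0)"

definition vstack :: "real^'n^'a \<Rightarrow> real^'n^'b \<Rightarrow> real^'n^('a + 'b)" where
  "vstack A B = (\<chi> r. case r of Inl a \<Rightarrow> A $ a | Inr b \<Rightarrow> B $ b)"

definition hstack :: "real^'a^'m \<Rightarrow> real^'b^'m \<Rightarrow> real^('a + 'b)^'m" where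
  "hstack H Y = (\<chi> r c. case c of Inl a \<Rightarrow> H $ r $ a | Inr b \<Rightarrow> Y $ r $ b)"

end

theory Submission
  imports Defs
begin

definition fip :: "real^'n^'m \<Rightarrow> real^'n^'m \<Rightarrow> real" where
  "fip A B = (\<Sum>i\<in>UNIV. \<Sum>j\<in>UNIV. A $ i $ j * B $ i $ j)"

lemma frob_fip: "frob_sq A = fip A A"
  by (simp add: frob_sq_def fip_def power2_eq_square)

lemma fip_comm: "fip A B = fip B A"
  by (simp add: fip_def mult.commute)

lemma fip_add_right: "fip A (B + C) = fip A B + fip A C"
  by (simp add: fip_def algebra_simps sum.distrib)

lemma fip_diff_right: "fip A (B - C) = fip A B - fip A C"
  by (simp add: fip_def algebra_simps sum_subtractf)

lemma fip_sum_left: "fip (\<Sum>i\<in>I. F i) B = (\<Sum>i\<in>I. fip (F i) B)"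
  by (induction I rule: infinite_finite_induct)
     (simp_all add: fip_def algebra_simps sum.distrib sum.swap[of _ I])

lemma fip_mult_left: "fip (A ** B) C = fip B (transpose A ** C)"
proof -
  have "fip (A ** B) C = (\<Sum>i\<in>UNIV. \<Sum>j\<in>UNIV. \<Sum>k\<in>UNIV. A$i$k * B$k$j * C$i$j)"
    by (simp add: fip_def matrix_matrix_mult_def sum_distrib_right)
  also have "\<dots> = (\<Sum>i\<in>UNIV. \<Sum>k\<in>UNIV. \<Sum>j\<in>UNIV. A$i$k * B$k$j * C$i$j)"
    by (rule sum.cong[OF refl], rule sum.swap)
  also have "\<dots> = (\<Sum>k\<in>UNIV. \<Sum>i\<in>UNIV. \<Sum>j\<in>UNIV. A$i$k * B$k$j * C$i$j)"
    by (rule sum.swap)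
  also have "\<dots> = (\<Sum>k\<in>UNIV. \<Sum>j\<in>UNIV. \<Sum>i\<in>UNIV. A$i$k * B$k$j * C$i$j)"
    by (rule sum.cong[OF refl], rule sum.swap)
  also have "\<dots> = fip B (transpose A ** C)"
    by (simp add: fip_def matrix_matrix_mult_def transpose_def sum_distrib_left mult_ac)
  finally show ?thesis .
qed

lemma fip_mult_right: "fip (A ** B) C = fip A (C ** transpose B)"
proof -
  have "fip (A ** B) C = (\<Sum>i\<in>UNIV. \<Sum>j\<in>UNIV. \<Sum>k\<in>UNIV. A$i$k * B$k$j * C$i$j)"
    by (simp add: fip_def matrix_matrix_mult_def sum_distrib_right)
  also have "\<dots> = (\<Sum>i\<in>UNIV. \<Sum>k\<in>UNIV. \<Sum>j\<in>UNIV. A$i$k * B$k$j * C$i$j)"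
    by (rule sum.cong[OF refl], rule sum.swap)
  also have "\<dots> = fip A (C ** transpose B)"
    by (simp add: fip_def matrix_matrix_mult_def transpose_def sum_distrib_left mult_ac)
  finally show ?thesis .
qed

lemma fip_trace: "fip A B = (\<Sum>j\<in>UNIV. (transpose A ** B) $ j $ j)"
  by (simp add: fip_def matrix_matrix_mult_def transpose_def, rule sum.swap)

lemma frob_nonneg: "frob_sq A \<ge> 0"
  by (simp add: frob_sq_def sum_nonneg)

lemma frob_add: "frob_sq (A + B) = frob_sq A + 2 * fip A B + frob_sq B"
  by (simp add: frob_sq_def fip_def power2_sum sum.distrib sum_distrib_left algebra_simps)

lemma diag_le1:
  fixes A B :: "real^'p^'d"
  assumes "transpose A ** A = mat 1" "transpose B ** B = mat 1"
  shows "(transpose A ** B) $ j $ j \<le> 1"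
proof -
  have a: "(\<Sum>i\<in>UNIV. (A$i$j)^2) = 1"
    using arg_cong[OF assms(1), of "\<lambda>M. M$j$j"]
    by (simp add: matrix_matrix_mult_def transpose_def mat_def power2_eq_square)
  have b: "(\<Sum>i\<in>UNIV. (B$i$j)^2) = 1"
    using arg_cong[OF assms(2), of "\<lambda>M. M$j$j"]
    by (simp add: matrix_matrix_mult_def transpose_def mat_def power2_eq_square)
  have "2 * (transpose A ** B) $ j $ j = (\<Sum>i\<in>UNIV. 2 * (A$i$j * B$i$j))"
    by (simp add: matrix_matrix_mult_def transpose_def sum_distrib_left)
  also have "\<dots> \<le> (\<Sum>i\<in>UNIV. (A$i$j)^2 + (B$i$j)^2)"
    by (rule sum_mono) (metis sum_squares_bound mult.assoc)
  also have "\<dots> = 2" using a b by (simp add: sum.distrib)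
  finally show ?thesis by simp
qed

lemma mult_vstack:
  "M ** transpose (vstack A B) = hstack (M ** transpose A) (M ** transpose B)"
  by (simp add: vec_eq_iff hstack_def vstack_def matrix_matrix_mult_def transpose_def split: sum.split)

lemma hstack_vstack:
  "hstack H Y ** vstack C S = H ** C + Y ** S"
  by (simp add: vec_eq_iff hstack_def vstack_def matrix_matrix_mult_def sum.Plus
       flip: UNIV_Plus_UNIV)

lemma transpose_mcos: "transpose (mcos Th t) = mcos Th t"
  by (simp add: vec_eq_iff transpose_def mcos_def)
lemma transpose_msin: "transpose (msin Th t) = msin Th t"
  by (simp add: vec_eq_iff transpose_def msin_def)


lemma frob_diff: "frob_sq (A - B) = frob_sq A - 2 * fip A B + frob_sq B"
  by (simp add: frob_sq_def fip_def power2_diff sum.distrib sum_subtractf sum_distrib_left algebra_simps)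

lemma matrix_add_rdistrib': "(B + C) ** (A::real^_^_) = B ** A + C ** A"
  by (simp add: vec_eq_iff matrix_matrix_mult_def sum.distrib distrib_right)

lemma fip_diag:
  assumes "diag_mat S"
  shows "fip S M = (\<Sum>j\<in>UNIV. S$j$j * M$j$j)"
proof -
  have "\<And>i. (\<Sum>j\<in>UNIV. S$i$j * M$i$j) = (\<Sum>j\<in>UNIV. if j = i then S$i$i * M$i$i else 0)"
    by (rule sum.cong) (use assms in \<open>auto simp: diag_mat_def\<close>)
  then show ?thesis by (simp add: fip_def)
qed

lemma stiefel_frob:
  assumes "(Q::real^'p^'d) \<in> stiefel"
  shows "frob_sq Q = real CARD('p)"
  using assms by (simp add: frob_fip fip_trace stiefel_def mat_def)

theorem mainTheorem4:
  fixes T :: nat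
    and X :: "nat \<Rightarrow> real^'l^'d"
    and Z :: "nat \<Rightarrow> real^'k^('k + 'k)"
    and Q' :: "real^('k + 'k)^'d"
    and W :: "real^('k + 'k)^'d"
    and S :: "real^('k + 'k)^('k + 'k)"
    and V :: "real^('k + 'k)^('k + 'k)"
  assumes dim: "CARD('k + 'k) \<le> CARD('d)"
    and Q'_st: "Q' \<in> stiefel"
    and W_orth: "transpose W ** W = mat 1"
    and S_diag: "diag_mat S" and S_nonneg: "\<forall>j. S $ j $ j \<ge> 0"
    and V_orth: "transpose V ** V = mat 1"
    and svd: "Rmat T X Z Q' = W ** S ** transpose V"
  shows "(W ** transpose V \<in> stiefel \<and>
          (\<forall>Q\<in>stiefel. frob_sq (W ** transpose V - Rmat T X Z Q')
                          \<le> frob_sq (Q - Rmat T X Z Q')))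
       \<and> lossL T X Z (W ** transpose V) \<le> lossL T X Z Q'
       \<and> (\<forall>(Th :: real^'k^'k) (t :: nat \<Rightarrow> real).
            diag_mat Th \<and> (\<forall>i. Z i = vstack (mcos Th (t i)) (msin Th (t i))) \<longrightarrow>
            (let G = (\<lambda>i. transpose (Q' ** Z i) ** X i) in
              Rmat T X Z Q' =
                (\<Sum>i\<in>{1..T}. hstack (X i ** transpose (G i) ** mcos Th (t i))
                                     (X i ** transpose (G i) ** msin Th (t i))))
            \<and> (\<forall>H Y H' Y'. Q' = hstack H' Y' \<and> W ** transpose V = hstack H Y \<longrightarrow>
                 - (\<Sum>i\<in>{1..T}. frob_sq (transpose (X i) ** (H ** mcos Th (t i) + Y ** msin Th (t i))))
                 \<le> - (\<Sum>i\<in>{1..T}. frob_sq (transpose (X i) ** (H' ** mcos Th (t i) + Y' ** msin Th (t i))))))"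
proof -
  define R where "R = Rmat T X Z Q'"
  define Qh where "Qh = W ** transpose V"
  have VVt: "V ** transpose V = mat 1"
    using V_orth orthogonal_matrix orthogonal_matrix_def by blast
  have Qh_st: "Qh \<in> stiefel"
  proof -
    have "transpose Qh ** Qh = V ** (transpose W ** W) ** transpose V"
      by (simp add: Qh_def matrix_transpose_mul matrix_mul_assoc)
    also have "\<dots> = mat 1" using W_orth VVt by simp
    finally show ?thesis by (simp add: stiefel_def)
  qed
  have fipQ: "fip Q R = fip S (transpose W ** (Q ** V))" for Q :: "real^('k + 'k)^'d"
  proof -
    have "fip Q R = fip ((W ** S) ** transpose V) Q" unfolding R_def svd by (rule fip_comm)
    also have "\<dots> = fip (W ** S) (Q ** V)" by (subst fip_mult_right) simp
    also have "\<dots> = fip S (transpose W ** (Q ** V))" by (rule fip_mult_left)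
    finally show ?thesis .
  qed
  have bound: "fip Q R \<le> (\<Sum>j\<in>UNIV. S$j$j)" if "Q \<in> stiefel" for Q
  proof -
    have "transpose (Q ** V) ** (Q ** V) = transpose V ** (transpose Q ** Q) ** V"
      by (simp add: matrix_transpose_mul matrix_mul_assoc)
    also have "\<dots> = mat 1" using that V_orth by (simp add: stiefel_def)
    finally have QV: "transpose (Q ** V) ** (Q ** V) = mat 1" .
    have "fip Q R = (\<Sum>j\<in>UNIV. S$j$j * (transpose W ** (Q ** V))$j$j)"
      by (simp add: fipQ fip_diag[OF S_diag])
    also have "\<dots> \<le> (\<Sum>j\<in>UNIV. S$j$j)"
      by (rule sum_mono) (metis S_nonneg diag_le1[OF W_orth QV] mult_left_le mult.commute)
    finally show ?thesis .
  qed
  have attain: "fip Qh R = (\<Sum>j\<in>UNIV. S$j$j)"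
  proof -
    have "Qh ** V = W" by (simp add: Qh_def V_orth flip: matrix_mul_assoc)
    then have "transpose W ** (Qh ** V) = mat 1" by (simp add: W_orth)
    then show ?thesis by (simp add: fipQ fip_diag[OF S_diag] mat_def)
  qed
  have opt: "fip Q R \<le> fip Qh R" if "Q \<in> stiefel" for Q
    using bound[OF that] attain by simp
  have part1: "\<forall>Q\<in>stiefel. frob_sq (Qh - R) \<le> frob_sq (Q - R)"
  proof
    fix Q :: "real^('k + 'k)^'d" assume Q: "Q \<in> stiefel"
    show "frob_sq (Qh - R) \<le> frob_sq (Q - R)"
      using opt[OF Q] stiefel_frob[OF Q] stiefel_frob[OF Qh_st] by (simp add: frob_diff)
  qed
  define D where "D = Qh - Q'"
  have term_eq: "fip (X i ** transpose (X i) ** Q' ** Z i ** transpose (Z i)) E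
      = fip (transpose (X i) ** Q' ** Z i) (transpose (X i) ** E ** Z i)" for i E
  proof -
    have "X i ** transpose (X i) ** Q' ** Z i ** transpose (Z i)
        = (X i ** (transpose (X i) ** Q' ** Z i)) ** transpose (Z i)"
      by (simp add: matrix_mul_assoc)
    then have "fip (X i ** transpose (X i) ** Q' ** Z i ** transpose (Z i)) E
        = fip (X i ** (transpose (X i) ** Q' ** Z i)) (E ** Z i)"
      by (subst fip_mult_right) (simp add: matrix_mul_assoc)
    also have "\<dots> = fip (transpose (X i) ** Q' ** Z i) (transpose (X i) ** (E ** Z i))"
      by (rule fip_mult_left)
    finally show ?thesis by (simp add: matrix_mul_assoc)
  qed
  have fipRD: "fip R D = (\<Sum>i\<in>{1..T}. fip (transpose (X i) ** Q' ** Z i) (transpose (X i) ** D ** Z i))"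
    unfolding R_def Rmat_def fip_sum_left by (rule sum.cong) (simp_all only: term_eq)
  have RD: "fip R D \<ge> 0"
    using opt[OF Q'_st] by (simp add: D_def fip_diff_right fip_comm)
  have split: "transpose (X i) ** Qh ** Z i = transpose (X i) ** Q' ** Z i + transpose (X i) ** D ** Z i" for i
  proof -
    have "Qh = Q' + D" by (simp add: D_def)
    then show ?thesis by (simp add: matrix_add_ldistrib matrix_add_rdistrib')
  qed
  have "(\<Sum>i\<in>{1..T}. frob_sq (transpose (X i) ** Qh ** Z i))
      = (\<Sum>i\<in>{1..T}. frob_sq (transpose (X i) ** Q' ** Z i)) + 2 * fip R D
        + (\<Sum>i\<in>{1..T}. frob_sq (transpose (X i) ** D ** Z i))"
    by (simp add: split frob_add fipRD sum.distrib sum_distrib_left)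
  moreover have "(\<Sum>i\<in>{1..T}. frob_sq (transpose (X i) ** D ** Z i)) \<ge> 0"
    by (simp add: sum_nonneg frob_nonneg)
  ultimately have part2: "lossL T X Z Qh \<le> lossL T X Z Q'"
    using RD by (simp add: lossL_def)
  have part3: "diag_mat Th \<and> (\<forall>i. Z i = vstack (mcos Th (t i)) (msin Th (t i))) \<longrightarrow>
            (let G = (\<lambda>i. transpose (Q' ** Z i) ** X i) in
              Rmat T X Z Q' =
                (\<Sum>i\<in>{1..T}. hstack (X i ** transpose (G i) ** mcos Th (t i))
                                     (X i ** transpose (G i) ** msin Th (t i))))
            \<and> (\<forall>H Y H' Y'. Q' = hstack H' Y' \<and> Qh = hstack H Y \<longrightarrow>
                 - (\<Sum>i\<in>{1..T}. frob_sq (transpose (X i) ** (H ** mcos Th (t i) + Y ** msin Th (t i))))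
                 \<le> - (\<Sum>i\<in>{1..T}. frob_sq (transpose (X i) ** (H' ** mcos Th (t i) + Y' ** msin Th (t i)))))"
    for Th :: "real^'k^'k" and t :: "nat \<Rightarrow> real"
  proof
    assume A: "diag_mat Th \<and> (\<forall>i. Z i = vstack (mcos Th (t i)) (msin Th (t i)))"
    then have Zi: "Z i = vstack (mcos Th (t i)) (msin Th (t i))" for i by blast
    have r: "X i ** transpose (X i) ** Q' ** Z i ** transpose (Z i)
       = hstack (X i ** transpose (transpose (Q' ** Z i) ** X i) ** mcos Th (t i))
                (X i ** transpose (transpose (Q' ** Z i) ** X i) ** msin Th (t i))" for i
    proof -
      have "X i ** transpose (X i) ** Q' ** Z i ** transpose (Z i)
          = (X i ** transpose (transpose (Q' ** Z i) ** X i)) ** transpose (Z i)"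
        by (simp add: matrix_transpose_mul matrix_mul_assoc)
      also have "\<dots> = hstack (X i ** transpose (transpose (Q' ** Z i) ** X i) ** mcos Th (t i))
                (X i ** transpose (transpose (Q' ** Z i) ** X i) ** msin Th (t i))"
        by (subst (2) Zi) (simp add: mult_vstack transpose_mcos transpose_msin)
      finally show ?thesis .
    qed
    have l: "(\<Sum>i\<in>{1..T}. frob_sq (transpose (X i) ** (H ** mcos Th (t i) + Y ** msin Th (t i))))
       = - lossL T X Z (hstack H Y)" for H Y
      by (simp add: lossL_def Zi hstack_vstack flip: matrix_mul_assoc)
    show "(let G = (\<lambda>i. transpose (Q' ** Z i) ** X i) in
              Rmat T X Z Q' =
                (\<Sum>i\<in>{1..T}. hstack (X i ** transpose (G i) ** mcos Th (t i))
                                     (X i ** transpose (G i) ** msin Th (t i))))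
            \<and> (\<forall>H Y H' Y'. Q' = hstack H' Y' \<and> Qh = hstack H Y \<longrightarrow>
                 - (\<Sum>i\<in>{1..T}. frob_sq (transpose (X i) ** (H ** mcos Th (t i) + Y ** msin Th (t i))))
                 \<le> - (\<Sum>i\<in>{1..T}. frob_sq (transpose (X i) ** (H' ** mcos Th (t i) + Y' ** msin Th (t i)))))"
    proof
      show "let G = (\<lambda>i. transpose (Q' ** Z i) ** X i) in
              Rmat T X Z Q' =
                (\<Sum>i\<in>{1..T}. hstack (X i ** transpose (G i) ** mcos Th (t i))
                                     (X i ** transpose (G i) ** msin Th (t i)))"
        unfolding Let_def Rmat_def by (rule sum.cong) (simp_all only: r)
      show "\<forall>H Y H' Y'. Q' = hstack H' Y' \<and> Qh = hstack H Y \<longrightarrow>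
                 - (\<Sum>i\<in>{1..T}. frob_sq (transpose (X i) ** (H ** mcos Th (t i) + Y ** msin Th (t i))))
                 \<le> - (\<Sum>i\<in>{1..T}. frob_sq (transpose (X i) ** (H' ** mcos Th (t i) + Y' ** msin Th (t i))))"
        using part2 by (simp only: l) auto
    qed
  qed
  show ?thesis
    using Qh_st part1 part2 part3 by (simp add: Qh_def R_def)
qed

end
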